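(* Let $\vec\kappa=(\kappa_0,\kappa_1,\kappa_\infty,\theta_1,\ldots,\theta_N)$ and $R_\tau(\vec\kappa)=(1-\kappa_0,1-\kappa_1,-\kappa_\infty,-\theta_1,\ldots,-\theta_N)$. Define the birational transformation $R_\tau:(q,p)\mapsto(Q,P)$ by $$Q_i=\frac{s_ip_i(q_ip_i-\theta_i)}{(\alpha+\sum_jq_jp_j)(\alpha+\kappa_\infty+\sum_jq_jp_j)},\qquad Q_iP_i=-q_ip_i\quad(i=1,\dots,N),$$ with $\alpha=\alpha(\vec\kappa)$, and put $\widetilde H_i=H_i(q,p,s;\vec\kappa)-\dfrac{q_ip_i}{s_i}$. Then (i) $\sum_i\big(dp_i\wedge dq_i-dH_i\wedge ds_i\big)=\sum_i\big(dP_i\wedge dQ_i-d\widetilde H_i\wedge ds_i\big)$ as 2-forms in the variables $(q,p,s)$, where $H_i=H_i(q,p,s;\vec\kappa)$; (ii) $\widetilde H_i=H_i(Q,P,s;R_\tau(\vec\kappa))$ for $i=1,\dots,N$. Thus $R_\tau$ is a birational canonical transformation from $\mathcal H_N(q,p,s,H;\vec\kappa)$ to $\mathcal H_N(Q,P,s,\widetilde H;R_\tau(\vec\kappa))$, and in particular it maps solutions of $\mathcal H_N(\vec\kappa)$ to solutions of $\mathcal H_N(R_\tau(\vec\kappa))$.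
   Context: For $\vec\kappa=(\kappa_0,\kappa_1,\kappa_\infty,\theta_1,\ldots,\theta_N)\in\mathbb C^{N+3}$ put $\alpha=\alpha(\vec\kappa)=-\frac12(\kappa_0+\kappa_1+\kappa_\infty+\sum_{i=1}^N\theta_i-1)$, $R_{ij}=s_i(s_j-1)/(s_j-s_i)$, $S_{ij}=s_i(s_i-1)/(s_i-s_j)$. Define $H_i=H_i(q,p,s;\vec\kappa)$, $i=1,\dots,N$, by $s_i(s_i-1)H_i=q_i(\alpha+\sum_j q_jp_j)(\alpha+\kappa_\infty+\sum_j q_jp_j)+s_ip_i(q_ip_i-\theta_i)-\sum_{j\neq i}R_{ji}(q_jp_j-\theta_j)q_ip_j-\sum_{j\neq i}S_{ij}(q_ip_i-\theta_i)q_jp_i-\sum_{j\neq i}R_{ij}q_jp_j(q_ip_i-\theta_i)-\sum_{j\neq i}R_{ij}q_ip_i(q_jp_j-\theta_j)-(s_i+1)(q_ip_i-\theta_i)q_ip_i+(\kappa_1s_i+\kappa_0-1)q_ip_i$, where $\sum_j$ runs over $j=1,\dots,N$ and $\sum_{j\ne i}$ omits $j=i$. The Garnier system $\mathcal H_N(\vec\kappa)$ is the Hamiltonian system $\partial q_i/\partial s_j=\partial H_j/\partial p_i$, $\partial p_i/\partial s_j=-\partial H_j/\partial q_i$ ($i,j=1,\dots,N$) for functions $q_i(s),p_i(s)$ of $s=(s_1,\dots,s_N)$. *)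

theory Defs
  imports "HOL-Analysis.Analysis"
begin

text \<open>The index set {1..N} is a finite type 'n (N = CARD('n)).\<close>

definition galpha :: "complex \<Rightarrow> complex \<Rightarrow> complex \<Rightarrow> complex^'n::finite \<Rightarrow> complex" where
  "galpha k0 k1 kinf th = - (k0 + k1 + kinf + (\<Sum>i\<in>UNIV. th $ i) - 1) / 2"

definition gR :: "complex^'n::finite \<Rightarrow> 'n \<Rightarrow> 'n \<Rightarrow> complex" where
  "gR s i j = s $ i * (s $ j - 1) / (s $ j - s $ i)"

definition gS :: "complex^'n::finite \<Rightarrow> 'n \<Rightarrow> 'n \<Rightarrow> complex" where
  "gS s i j = s $ i * (s $ i - 1) / (s $ i - s $ j)"

definition qp_sum :: "complex^'n::finite \<Rightarrow> complex^'n \<Rightarrow> complex" where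
  "qp_sum q p = (\<Sum>j\<in>UNIV. q $ j * p $ j)"

text \<open>The Garnier Hamiltonian H_i, defined via
  s_i (s_i - 1) H_i = (right-hand side); i.e. H_i = RHS / (s_i (s_i - 1)).\<close>
definition garnierH ::
  "complex \<Rightarrow> complex \<Rightarrow> complex \<Rightarrow> complex^'n::finite \<Rightarrow>
   complex^'n \<Rightarrow> complex^'n \<Rightarrow> complex^'n \<Rightarrow> 'n \<Rightarrow> complex" where
  "garnierH k0 k1 kinf th q p s i =
     (let a = galpha k0 k1 kinf th; E = qp_sum q p in
      (q $ i * (a + E) * (a + kinf + E)
       + s $ i * p $ i * (q $ i * p $ i - th $ i)
       - (\<Sum>j\<in>UNIV - {i}. gR s j i * (q $ j * p $ j - th $ j) * q $ i * p $ j)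
       - (\<Sum>j\<in>UNIV - {i}. gS s i j * (q $ i * p $ i - th $ i) * q $ j * p $ i)
       - (\<Sum>j\<in>UNIV - {i}. gR s i j * q $ j * p $ j * (q $ i * p $ i - th $ i))
       - (\<Sum>j\<in>UNIV - {i}. gR s i j * q $ i * p $ i * (q $ j * p $ j - th $ j))
       - (s $ i + 1) * (q $ i * p $ i - th $ i) * q $ i * p $ i
       + (k1 * s $ i + k0 - 1) * q $ i * p $ i)
      / (s $ i * (s $ i - 1)))"

definition RtauQ ::
  "complex \<Rightarrow> complex \<Rightarrow> complex \<Rightarrow> complex^'n::finite \<Rightarrow>
   complex^'n \<Rightarrow> complex^'n \<Rightarrow> complex^'n \<Rightarrow> 'n \<Rightarrow> complex" where
  "RtauQ k0 k1 kinf th q p s i =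
     (let a = galpha k0 k1 kinf th; E = qp_sum q p in
      s $ i * p $ i * (q $ i * p $ i - th $ i) / ((a + E) * (a + kinf + E)))"

definition RtauP ::
  "complex \<Rightarrow> complex \<Rightarrow> complex \<Rightarrow> complex^'n::finite \<Rightarrow>
   complex^'n \<Rightarrow> complex^'n \<Rightarrow> complex^'n \<Rightarrow> 'n \<Rightarrow> complex" where
  "RtauP k0 k1 kinf th q p s i = - q $ i * p $ i / RtauQ k0 k1 kinf th q p s i"

definition Htilde ::
  "complex \<Rightarrow> complex \<Rightarrow> complex \<Rightarrow> complex^'n::finite \<Rightarrow>
   complex^'n \<Rightarrow> complex^'n \<Rightarrow> complex^'n \<Rightarrow> 'n \<Rightarrow> complex" where
  "Htilde k0 k1 kinf th q p s i = garnierH k0 k1 kinf th q p s i - q $ i * p $ i / s $ i"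

text \<open>Generic (open, dense) domain where all the rational expressions are defined:
  s_i \<notin> {0,1}, s_i pairwise distinct, both factors of the denominator of Q_i nonzero,
  and Q_i \<noteq> 0 (i.e. p_i \<noteq> 0 and q_i p_i \<noteq> theta_i).\<close>
definition garnier_dom ::
  "complex \<Rightarrow> complex \<Rightarrow> complex \<Rightarrow> complex^'n::finite \<Rightarrow>
   ((complex^'n) \<times> (complex^'n) \<times> (complex^'n)) set" where
  "garnier_dom k0 k1 kinf th =
     {(q, p, s). (\<forall>i. s $ i \<noteq> 0 \<and> s $ i \<noteq> 1 \<and> p $ i \<noteq> 0 \<and> q $ i * p $ i \<noteq> th $ i)
        \<and> (\<forall>i j. i \<noteq> j \<longrightarrow> s $ i \<noteq> s $ j)
        \<and> galpha k0 k1 kinf th + qp_sum q p \<noteq> 0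
        \<and> galpha k0 k1 kinf th + kinf + qp_sum q p \<noteq> 0}"

definition wedge_d ::
  "('a::real_normed_vector \<Rightarrow> complex) \<Rightarrow> ('a \<Rightarrow> complex) \<Rightarrow> 'a \<Rightarrow> 'a \<Rightarrow> 'a \<Rightarrow> complex" where
  "wedge_d f g z u v =
     frechet_derivative f (at z) u * frechet_derivative g (at z) v
     - frechet_derivative f (at z) v * frechet_derivative g (at z) u"

end

theory Submission
  imports Defs
begin

type_synonym 'n pt = "(complex^'n) \<times> (complex^'n) \<times> (complex^'n)"

lemma hd_q: "((\<lambda>z::'n::finite pt. fst z $ j) has_derivative (\<lambda>u. fst u $ j)) F"
  by (intro bounded_linear_imp_has_derivative bounded_linear_compose[OF bounded_linear_vec_nth] bounded_linear_fst)
lemma hd_p: "((\<lambda>z::'n::finite pt. fst (snd z) $ j) has_derivative (\<lambda>u. fst (snd u) $ j)) F"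
  by (intro bounded_linear_imp_has_derivative bounded_linear_compose[OF bounded_linear_vec_nth]
      bounded_linear_compose[OF bounded_linear_fst] bounded_linear_snd)
lemma hd_s: "((\<lambda>z::'n::finite pt. snd (snd z) $ j) has_derivative (\<lambda>u. snd (snd u) $ j)) F"
  by (intro bounded_linear_imp_has_derivative bounded_linear_compose[OF bounded_linear_vec_nth]
      bounded_linear_compose[OF bounded_linear_snd] bounded_linear_snd)
lemma df_q: "(\<lambda>z::'n::finite pt. fst z $ j) differentiable F"
  using hd_q unfolding differentiable_def by blast
lemma df_p: "(\<lambda>z::'n::finite pt. fst (snd z) $ j) differentiable F"
  using hd_p unfolding differentiable_def by blast
lemma df_s: "(\<lambda>z::'n::finite pt. snd (snd z) $ j) differentiable F"
  using hd_s unfolding differentiable_def by blast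

lemma H_diff:
  fixes k0 k1 kinf :: complex and th :: "complex^'n::finite"
  assumes dom: "(q, p, s) \<in> garnier_dom k0 k1 kinf th"
  shows "(\<lambda>z::'n pt. garnierH k0 k1 kinf th (fst z) (fst (snd z)) (snd (snd z)) i) differentiable (at (q, p, s))"
proof -
  have s0: "s $ i \<noteq> 0" and s1: "s $ i \<noteq> 1" and sd: "\<And>j k. j \<noteq> k \<Longrightarrow> s $ j \<noteq> s $ k"
    using dom by (auto simp: garnier_dom_def)
  show ?thesis
    unfolding garnierH_def Let_def gR_def gS_def galpha_def qp_sum_def
    using s0 s1 sd
    by (intro derivative_intros df_q df_p df_s ballI) (auto dest: sd)
qed

lemma hd_w: "((\<lambda>z::'n::finite pt. fst z $ j * fst (snd z) $ j) has_derivative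
    (\<lambda>u. fst u $ j * fst (snd z0) $ j + fst z0 $ j * fst (snd u) $ j)) (at z0)"
  by (rule has_derivative_eq_rhs, rule has_derivative_mult[OF hd_q hd_p]) (auto simp: fun_eq_iff)

lemma hd_E: "((\<lambda>z::'n::finite pt. qp_sum (fst z) (fst (snd z))) has_derivative
    (\<lambda>u. \<Sum>j\<in>UNIV. fst u $ j * fst (snd z0) $ j + fst z0 $ j * fst (snd u) $ j)) (at z0)"
  unfolding qp_sum_def by (rule has_derivative_sum) (rule hd_w)

lemma hd_Q:
  fixes k0 k1 kinf :: complex and th :: "complex^'n::finite"
  assumes dom: "(q, p, s) \<in> garnier_dom k0 k1 kinf th"
  defines "A \<equiv> galpha k0 k1 kinf th + qp_sum q p"
  defines "B \<equiv> galpha k0 k1 kinf th + kinf + qp_sum q p"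
  defines "dE \<equiv> (\<lambda>u::'n pt. \<Sum>j\<in>UNIV. fst u $ j * p $ j + q $ j * fst (snd u) $ j)"
  shows "((\<lambda>z::'n pt. RtauQ k0 k1 kinf th (fst z) (fst (snd z)) (snd (snd z)) i) has_derivative
     (\<lambda>u. RtauQ k0 k1 kinf th q p s i *
        (snd (snd u) $ i / s $ i + fst (snd u) $ i / p $ i
         + (fst u $ i * p $ i + q $ i * fst (snd u) $ i) / (q $ i * p $ i - th $ i)
         - dE u / A - dE u / B))) (at (q, p, s))"
proof -
  have s0: "s $ i \<noteq> 0" and p0: "p $ i \<noteq> 0" and w0: "q $ i * p $ i - th $ i \<noteq> 0"
    and A0: "A \<noteq> 0" and B0: "B \<noteq> 0"
    using dom by (auto simp: garnier_dom_def A_def B_def)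
  have 1: "((\<lambda>z::'n pt. snd (snd z) $ i * fst (snd z) $ i * (fst z $ i * fst (snd z) $ i - th $ i)) has_derivative
     (\<lambda>u. s $ i * p $ i * (q $ i * p $ i - th $ i) *
        (snd (snd u) $ i / s $ i + fst (snd u) $ i / p $ i
         + (fst u $ i * p $ i + q $ i * fst (snd u) $ i) / (q $ i * p $ i - th $ i)))) (at (q, p, s))"
    apply (rule has_derivative_eq_rhs)
     apply (rule has_derivative_mult[OF has_derivative_mult[OF hd_s hd_p] has_derivative_diff[OF hd_w has_derivative_const]])
    using s0 p0 w0 by (simp add: fun_eq_iff field_simps)
  have 2: "((\<lambda>z::'n pt. (galpha k0 k1 kinf th + qp_sum (fst z) (fst (snd z))) * (galpha k0 k1 kinf th + kinf + qp_sum (fst z) (fst (snd z))))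
     has_derivative (\<lambda>u. A * B * (dE u / A + dE u / B))) (at (q, p, s))"
    apply (rule has_derivative_eq_rhs)
     apply (rule has_derivative_mult[OF has_derivative_add[OF has_derivative_const hd_E] has_derivative_add[OF has_derivative_const hd_E]])
    unfolding fst_conv snd_conv A_def[symmetric] B_def[symmetric] dE_def
    using A0 B0 by (simp add: fun_eq_iff field_simps)
  show ?thesis
    unfolding RtauQ_def Let_def
    apply (rule has_derivative_eq_rhs)
     apply (rule has_derivative_divide'[OF 1 2])
    using A0 B0 s0 p0 w0 apply (simp add: A_def B_def)
    unfolding fst_conv snd_conv Let_def A_def[symmetric] B_def[symmetric]
    using A0 B0 s0 p0 w0 by (simp add: fun_eq_iff field_simps)
qed

lemma l1: fixes Qv du dv w Lu Lv :: complex assumes "Qv \<noteq> 0" shows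
  "((- du * Qv + w * (Qv * Lu)) / (Qv * Qv)) * (Qv * Lv) - ((- dv * Qv + w * (Qv * Lv)) / (Qv * Qv)) * (Qv * Lu)
   = - du * Lv + dv * Lu"
  using assms by (simp add: field_simps)
lemma l2: fixes a b c a' b' c' q p s r A B Eu Ev :: complex
  assumes "s \<noteq> 0" "p \<noteq> 0" "r \<noteq> 0" "A \<noteq> 0" "B \<noteq> 0"
  shows "- (a * p + q * b) * (c' / s + b' / p + (a' * p + q * b') / r - Ev / A - Ev / B)
       + (a' * p + q * b') * (c / s + b / p + (a * p + q * b) / r - Eu / A - Eu / B)
     = - ((a * p + q * b) * c' - (a' * p + q * b') * c) / s + (b * a' - b' * a)
     + (1/A + 1/B) * ((a * p + q * b) * Ev - (a' * p + q * b') * Eu)"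
  using assms by (simp add: field_simps)
lemma l3: fixes Hu Hv du dv c c' w s X Y :: complex assumes "s \<noteq> 0" shows
  "(- (du * c' - dv * c) / s + X + Y) - ((Hu - (du * s - w * c) / (s * s)) * c' - (Hv - (dv * s - w * c') / (s * s)) * c)
   - (X - (Hu * c' - Hv * c)) = Y"
  using assms by (simp add: field_simps)

lemma hd_P:
  fixes k0 k1 kinf :: complex and th :: "complex^'n::finite"
  assumes dom: "(q, p, s) \<in> garnier_dom k0 k1 kinf th"
  and hQ: "((\<lambda>z::'n pt. RtauQ k0 k1 kinf th (fst z) (fst (snd z)) (snd (snd z)) i) has_derivative dQ) (at (q, p, s))"
  shows "((\<lambda>z::'n pt. RtauP k0 k1 kinf th (fst z) (fst (snd z)) (snd (snd z)) i) has_derivative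
     (\<lambda>u. (- (fst u $ i * p $ i + q $ i * fst (snd u) $ i) * RtauQ k0 k1 kinf th q p s i
           + q $ i * p $ i * dQ u) / (RtauQ k0 k1 kinf th q p s i * RtauQ k0 k1 kinf th q p s i))) (at (q, p, s))"
proof -
  have Q0: "RtauQ k0 k1 kinf th q p s i \<noteq> 0"
    using dom by (auto simp: garnier_dom_def RtauQ_def Let_def)
  show ?thesis
    unfolding RtauP_def
    apply (rule has_derivative_eq_rhs)
     apply (rule has_derivative_divide'[OF has_derivative_mult[OF has_derivative_minus[OF hd_q] hd_p] hQ])
    using Q0 by (auto simp: fun_eq_iff algebra_simps)
qed

lemma hd_ws: "((\<lambda>z::'n::finite pt. fst z $ i * fst (snd z) $ i / snd (snd z) $ i) has_derivative
    (\<lambda>u. ((fst u $ i * fst (snd z0) $ i + fst z0 $ i * fst (snd u) $ i) * snd (snd z0) $ i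
       - fst z0 $ i * fst (snd z0) $ i * snd (snd u) $ i) / (snd (snd z0) $ i * snd (snd z0) $ i))) (at z0)"
  if "snd (snd z0) $ i \<noteq> 0"
  by (rule has_derivative_divide'[OF hd_w hd_s that])

lemma cp_conv: "(\<lambda>(q, p, s). F q p s) = (\<lambda>z. F (fst z) (fst (snd z)) (snd (snd z)))"
  by (auto simp: fun_eq_iff split: prod.split)

lemma fd: "(f has_derivative f') (at z) \<Longrightarrow> frechet_derivative f (at z) u = f' u"
  using frechet_derivative_at by metis

lemma part1:
  fixes k0 k1 kinf :: complex and th :: "complex^'n::finite"
  assumes zdom: "z \<in> garnier_dom k0 k1 kinf th"
  shows "(\<Sum>i\<in>UNIV.
          wedge_d (\<lambda>(q, p, s). p $ i) (\<lambda>(q, p, s). q $ i) z u v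
        - wedge_d (\<lambda>(q, p, s). garnierH k0 k1 kinf th q p s i) (\<lambda>(q, p, s). s $ i) z u v)
    = (\<Sum>i\<in>UNIV.
          wedge_d (\<lambda>(q, p, s). RtauP k0 k1 kinf th q p s i)
                  (\<lambda>(q, p, s). RtauQ k0 k1 kinf th q p s i) z u v
        - wedge_d (\<lambda>(q, p, s). Htilde k0 k1 kinf th q p s i) (\<lambda>(q, p, s). s $ i) z u v)"
proof -
  obtain q p s where z: "z = (q, p, s)" by (cases z) auto
  have dom: "(q, p, s) \<in> garnier_dom k0 k1 kinf th" using zdom z by simp
  define A where "A = galpha k0 k1 kinf th + qp_sum q p"
  define B where "B = galpha k0 k1 kinf th + kinf + qp_sum q p"
  define dE where "dE = (\<lambda>u::'n pt. \<Sum>j\<in>UNIV. fst u $ j * p $ j + q $ j * fst (snd u) $ j)"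
  define dw where "dw = (\<lambda>j (u::'n pt). fst u $ j * p $ j + q $ j * fst (snd u) $ j)"
  have s0: "\<And>j. s $ j \<noteq> 0" and p0: "\<And>j. p $ j \<noteq> 0" and w0: "\<And>j. q $ j * p $ j - th $ j \<noteq> 0"
    and A0: "A \<noteq> 0" and B0: "B \<noteq> 0"
    using dom by (auto simp: garnier_dom_def A_def B_def)
  define Qv where "Qv = (\<lambda>j. RtauQ k0 k1 kinf th q p s j)"
  have Q0: "Qv j \<noteq> 0" for j
    using dom by (auto simp: garnier_dom_def RtauQ_def Let_def Qv_def)
  define L where "L = (\<lambda>j (u::'n pt). snd (snd u) $ j / s $ j + fst (snd u) $ j / p $ j
         + (fst u $ j * p $ j + q $ j * fst (snd u) $ j) / (q $ j * p $ j - th $ j)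
         - dE u / A - dE u / B)"
  have hQ: "((\<lambda>z::'n pt. RtauQ k0 k1 kinf th (fst z) (fst (snd z)) (snd (snd z)) j) has_derivative
     (\<lambda>u. Qv j * L j u)) (at (q, p, s))" for j
    unfolding Qv_def L_def A_def B_def dE_def by (rule hd_Q[OF dom])
  note hP = hd_P[OF dom hQ]
  have "\<forall>j. \<exists>D. ((\<lambda>z::'n pt. garnierH k0 k1 kinf th (fst z) (fst (snd z)) (snd (snd z)) j) has_derivative D) (at (q, p, s))"
    using H_diff[OF dom] unfolding differentiable_def by blast
  from choice[OF this] obtain dH where hH: "\<And>j. ((\<lambda>z::'n pt. garnierH k0 k1 kinf th (fst z) (fst (snd z)) (snd (snd z)) j) has_derivative dH j) (at (q, p, s))"
    by blast
  have hHt: "((\<lambda>z::'n pt. Htilde k0 k1 kinf th (fst z) (fst (snd z)) (snd (snd z)) j) has_derivative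
     (\<lambda>u. dH j u - ((fst u $ j * p $ j + q $ j * fst (snd u) $ j) * s $ j
       - q $ j * p $ j * snd (snd u) $ j) / (s $ j * s $ j))) (at (q, p, s))" for j
    unfolding Htilde_def using has_derivative_diff[OF hH[of j] hd_ws[of "(q,p,s)" j]] s0[of j] by simp
  have key: "(wedge_d (\<lambda>(q, p, s). RtauP k0 k1 kinf th q p s j)
                  (\<lambda>(q, p, s). RtauQ k0 k1 kinf th q p s j) z u v
        - wedge_d (\<lambda>(q, p, s). Htilde k0 k1 kinf th q p s j) (\<lambda>(q, p, s). s $ j) z u v)
      - (wedge_d (\<lambda>(q, p, s). p $ j) (\<lambda>(q, p, s). q $ j) z u v
        - wedge_d (\<lambda>(q, p, s). garnierH k0 k1 kinf th q p s j) (\<lambda>(q, p, s). s $ j) z u v)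
      = (1/A + 1/B) * (dw j u * dE v - dw j v * dE u)" for j
  proof -
    have e1: "wedge_d (\<lambda>(q, p, s). RtauP k0 k1 kinf th q p s j)
                  (\<lambda>(q, p, s). RtauQ k0 k1 kinf th q p s j) z u v
       = - dw j u * L j v + dw j v * L j u"
      unfolding wedge_d_def cp_conv z fd[OF hQ] fd[OF hP] Qv_def[symmetric] dw_def
      by (rule l1[OF Q0])
    also have "\<dots> = - (dw j u * snd (snd v) $ j - dw j v * snd (snd u) $ j) / s $ j
        + (fst (snd u) $ j * fst v $ j - fst (snd v) $ j * fst u $ j)
        + (1/A + 1/B) * (dw j u * dE v - dw j v * dE u)"
      unfolding dw_def L_def by (rule l2[OF s0 p0 w0 A0 B0])
    finally have e1' : "wedge_d (\<lambda>(q, p, s). RtauP k0 k1 kinf th q p s j)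
                  (\<lambda>(q, p, s). RtauQ k0 k1 kinf th q p s j) z u v = \<dots>" .
    have e2: "wedge_d (\<lambda>(q, p, s). Htilde k0 k1 kinf th q p s j) (\<lambda>(q, p, s). s $ j) z u v
      = (dH j u - (dw j u * s $ j - q $ j * p $ j * snd (snd u) $ j) / (s $ j * s $ j)) * snd (snd v) $ j
      - (dH j v - (dw j v * s $ j - q $ j * p $ j * snd (snd v) $ j) / (s $ j * s $ j)) * snd (snd u) $ j"
      unfolding wedge_d_def cp_conv z fd[OF hHt] fd[OF hd_s] dw_def by simp
    have e3: "wedge_d (\<lambda>(q, p, s). p $ j) (\<lambda>(q, p, s). q $ j) z u v
      = fst (snd u) $ j * fst v $ j - fst (snd v) $ j * fst u $ j"
      unfolding wedge_d_def cp_conv z fd[OF hd_q] fd[OF hd_p] by simp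
    have e4: "wedge_d (\<lambda>(q, p, s). garnierH k0 k1 kinf th q p s j) (\<lambda>(q, p, s). s $ j) z u v
      = dH j u * snd (snd v) $ j - dH j v * snd (snd u) $ j"
      unfolding wedge_d_def cp_conv z fd[OF hH] fd[OF hd_s] by simp
    show ?thesis unfolding e1' e2 e3 e4 by (rule l3[OF s0])
  qed
  have sumz: "(\<Sum>j\<in>UNIV. (1/A + 1/B) * (dw j u * dE v - dw j v * dE u)) = 0"
  proof -
    have dEs: "dE = (\<lambda>u. \<Sum>j\<in>UNIV. dw j u)" by (simp add: dE_def dw_def)
    have "(\<Sum>j\<in>UNIV. (1/A + 1/B) * (dw j u * dE v - dw j v * dE u))
        = (1/A + 1/B) * ((\<Sum>j\<in>UNIV. dw j u) * dE v - (\<Sum>j\<in>UNIV. dw j v) * dE u)"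
      by (simp only: sum_distrib_left sum_distrib_right sum_subtractf right_diff_distrib)
    also have "\<dots> = 0" using dEs by (simp add: mult.commute)
    finally show ?thesis .
  qed
  have "(\<Sum>i\<in>UNIV. (wedge_d (\<lambda>(q, p, s). RtauP k0 k1 kinf th q p s i)
                  (\<lambda>(q, p, s). RtauQ k0 k1 kinf th q p s i) z u v
        - wedge_d (\<lambda>(q, p, s). Htilde k0 k1 kinf th q p s i) (\<lambda>(q, p, s). s $ i) z u v)
      - (wedge_d (\<lambda>(q, p, s). p $ i) (\<lambda>(q, p, s). q $ i) z u v
        - wedge_d (\<lambda>(q, p, s). garnierH k0 k1 kinf th q p s i) (\<lambda>(q, p, s). s $ i) z u v)) = 0"
    unfolding key by (rule sumz)
  then show ?thesis by (simp add: sum_subtractf)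
qed


lemma alg3: "si \<noteq> 0 \<Longrightarrow> sj \<noteq> 0 \<Longrightarrow> ui \<noteq> 0 \<Longrightarrow> uj \<noteq> 0 \<Longrightarrow> si - sj \<noteq> 0 \<Longrightarrow>
  sj * (si - 1) / (si - sj) * (- uj) * (- si * x * ui * qj / (sj * uj))
  = si * (si - 1) / (si - sj) * ui * qj * (x::complex)"
  by (simp add: field_simps)

lemma alg4: "si \<noteq> 0 \<Longrightarrow> sj \<noteq> 0 \<Longrightarrow> ui \<noteq> 0 \<Longrightarrow> uj \<noteq> 0 \<Longrightarrow> si - sj \<noteq> 0 \<Longrightarrow>
  si * (si - 1) / (si - sj) * (- ui) * (- sj * pj * uj * qi / (si * ui))
  = sj * (si - 1) / (si - sj) * uj * qi * (pj::complex)"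
  by (simp add: field_simps)

lemma finalalg: "(s::complex) \<noteq> 0 \<Longrightarrow> s \<noteq> 1 \<Longrightarrow>
  (A + B - C - D - e - f - g + h) / (s * (s - 1)) - w / s = (B + A - D - C - e - f - g + (h - (s - 1) * w)) / (s * (s - 1))"
  by (simp add: field_simps)

lemma part2:
  fixes k0 k1 kinf :: complex and th :: "complex^'n::finite"
  assumes dom: "(q, p, s) \<in> garnier_dom k0 k1 kinf th"
  shows "Htilde k0 k1 kinf th q p s i =
        garnierH (1 - k0) (1 - k1) (- kinf) (- th)
          (\<chi> j. RtauQ k0 k1 kinf th q p s j) (\<chi> j. RtauP k0 k1 kinf th q p s j) s i"
proof -
  define a where "a = galpha k0 k1 kinf th"
  define E where "E = qp_sum q p"
  define A where "A = a + E"
  define B where "B = a + kinf + E"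
  have s0: "\<And>j. s $ j \<noteq> 0" and s1: "\<And>j. s $ j \<noteq> 1" and p0: "\<And>j. p $ j \<noteq> 0"
    and w0: "\<And>j. q $ j * p $ j - th $ j \<noteq> 0"
    and sd: "\<And>j k. j \<noteq> k \<Longrightarrow> s $ j - s $ k \<noteq> 0"
    and A0: "A \<noteq> 0" and B0: "B \<noteq> 0"
    using dom by (auto simp: garnier_dom_def A_def B_def a_def E_def)
  define Q where "Q = (\<chi> j. RtauQ k0 k1 kinf th q p s j)"
  define P where "P = (\<chi> j. RtauP k0 k1 kinf th q p s j)"
  have Qj: "Q $ j = s $ j * p $ j * (q $ j * p $ j - th $ j) / (A * B)" for j
    by (simp add: Q_def RtauQ_def A_def B_def a_def E_def Let_def)
  have Q0: "Q $ j \<noteq> 0" for j using s0 p0 w0 A0 B0 by (simp add: Qj)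
  have QPj: "Q $ j * P $ j = - (q $ j * p $ j)" for j
    using Q0[of j] by (simp add: P_def Q_def RtauP_def field_simps)
  have Pj: "P $ j = - q $ j * A * B / (s $ j * (q $ j * p $ j - th $ j))" for j
  proof -
    have "P $ j = - q $ j * p $ j / Q $ j" by (simp add: P_def Q_def RtauP_def)
    also have "\<dots> = - q $ j * A * B / (s $ j * (q $ j * p $ j - th $ j))"
      using s0[of j] p0[of j] w0[of j] A0 B0 unfolding Qj by (simp add: field_simps)
    finally show ?thesis .
  qed
  have a': "galpha (1 - k0) (1 - k1) (- kinf) (- th) = - a"
    by (simp add: galpha_def a_def sum_negf field_simps)
  have E': "qp_sum Q P = - E"
    by (simp add: qp_sum_def E_def QPj sum_negf)
  have t1: "Q $ i * (- a + - E) * (- a + - kinf + - E) = s $ i * p $ i * (q $ i * p $ i - th $ i)"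
  proof -
    have "(- a + - E) * (- a + - kinf + - E) = A * B" by (simp add: A_def B_def algebra_simps)
    then show ?thesis using A0 B0 by (simp add: Qj mult.assoc)
  qed
  have t2: "s $ i * P $ i * (Q $ i * P $ i - (- th) $ i) = q $ i * (a + E) * (a + kinf + E)"
    unfolding QPj using s0[of i] w0[of i] unfolding Pj A_def B_def
    by (simp add: field_simps)
  have thm_: "(- th) $ j = - th $ j" for j by simp
  have QiPj: "Q $ k * P $ j = - s $ k * p $ k * (q $ k * p $ k - th $ k) * q $ j / (s $ j * (q $ j * p $ j - th $ j))" for j k
    using A0 B0 s0[of j] w0[of j] unfolding Qj Pj by (simp add: field_simps)
  have t3: "(\<Sum>j\<in>UNIV - {i}. gR s j i * (Q $ j * P $ j - (- th) $ j) * Q $ i * P $ j)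
      = (\<Sum>j\<in>UNIV - {i}. gS s i j * (q $ i * p $ i - th $ i) * q $ j * p $ i)"
  proof (rule sum.cong[OF refl])
    fix j assume "j \<in> UNIV - {i}"
    then have "j \<noteq> i" by auto
    then show "gR s j i * (Q $ j * P $ j - (- th) $ j) * Q $ i * P $ j
      = gS s i j * (q $ i * p $ i - th $ i) * q $ j * p $ i"
    proof -
      have "gR s j i * (Q $ j * P $ j - (- th) $ j) * Q $ i * P $ j = gR s j i * (-(q$j*p$j - th$j)) * (Q $ i * P $ j)"
        by (simp add: QPj mult.assoc)
      also have "\<dots> = gS s i j * (q $ i * p $ i - th $ i) * q $ j * p $ i"
        unfolding QiPj gR_def gS_def
        by (rule alg3) (use s0[of i] s0[of j] w0[of i] w0[of j] sd[of i j] \<open>j \<noteq> i\<close> in auto)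
      finally show ?thesis .
    qed
  qed
  have t4: "(\<Sum>j\<in>UNIV - {i}. gS s i j * (Q $ i * P $ i - (- th) $ i) * Q $ j * P $ i)
      = (\<Sum>j\<in>UNIV - {i}. gR s j i * (q $ j * p $ j - th $ j) * q $ i * p $ j)"
  proof (rule sum.cong[OF refl])
    fix j assume "j \<in> UNIV - {i}"
    then have "j \<noteq> i" by auto
    then show "gS s i j * (Q $ i * P $ i - (- th) $ i) * Q $ j * P $ i
      = gR s j i * (q $ j * p $ j - th $ j) * q $ i * p $ j"
    proof -
      have "gS s i j * (Q $ i * P $ i - (- th) $ i) * Q $ j * P $ i = gS s i j * (-(q$i*p$i - th$i)) * (Q $ j * P $ i)"
        by (simp add: QPj mult.assoc)
      also have "\<dots> = gR s j i * (q $ j * p $ j - th $ j) * q $ i * p $ j"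
        unfolding QiPj gR_def gS_def
        by (rule alg4) (use s0[of i] s0[of j] w0[of i] w0[of j] sd[of i j] \<open>j \<noteq> i\<close> in auto)
      finally show ?thesis .
    qed
  qed
  have t5: "(\<Sum>j\<in>UNIV - {i}. gR s i j * Q $ j * P $ j * (Q $ i * P $ i - (- th) $ i))
     = (\<Sum>j\<in>UNIV - {i}. gR s i j * q $ j * p $ j * (q $ i * p $ i - th $ i))"
  proof (rule sum.cong[OF refl])
    fix j
    have "gR s i j * Q $ j * P $ j * (Q $ i * P $ i - (- th) $ i) = gR s i j * (Q $ j * P $ j) * (Q $ i * P $ i - (- th) $ i)"
      by (simp only: mult.assoc)
    also have "\<dots> = gR s i j * q $ j * p $ j * (q $ i * p $ i - th $ i)"
      by (simp only: QPj) (simp add: algebra_simps)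
    finally show "gR s i j * Q $ j * P $ j * (Q $ i * P $ i - (- th) $ i) = gR s i j * q $ j * p $ j * (q $ i * p $ i - th $ i)"
      .
  qed
  have t6: "(\<Sum>j\<in>UNIV - {i}. gR s i j * Q $ i * P $ i * (Q $ j * P $ j - (- th) $ j))
     = (\<Sum>j\<in>UNIV - {i}. gR s i j * q $ i * p $ i * (q $ j * p $ j - th $ j))"
  proof (rule sum.cong[OF refl])
    fix j
    have "gR s i j * Q $ i * P $ i * (Q $ j * P $ j - (- th) $ j) = gR s i j * (Q $ i * P $ i) * (Q $ j * P $ j - (- th) $ j)"
      by (simp only: mult.assoc)
    also have "\<dots> = gR s i j * q $ i * p $ i * (q $ j * p $ j - th $ j)"
      by (simp only: QPj) (simp add: algebra_simps)
    finally show "gR s i j * Q $ i * P $ i * (Q $ j * P $ j - (- th) $ j) = gR s i j * q $ i * p $ i * (q $ j * p $ j - th $ j)"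
      .
  qed
  have T7: "(s$i+1) * (Q$i*P$i - (-th)$i) * Q$i * P$i = (s$i+1)*(q$i*p$i - th$i)*q$i*p$i"
  proof -
    have "(s$i+1) * (Q$i*P$i - (-th)$i) * Q$i * P$i = (s$i+1) * (Q$i*P$i - (-th)$i) * (Q$i * P$i)"
      by (simp only: mult.assoc)
    also have "\<dots> = (s$i+1)*(q$i*p$i - th$i)*q$i*p$i"
      by (simp only: QPj) (simp add: algebra_simps)
    finally show ?thesis .
  qed
  have T8: "((1 - k1) * s$i + (1 - k0) - 1) * Q$i * P$i = (k1 * s$i + k0 - 1) * q$i * p$i - (s$i - 1) * (q$i * p$i)"
  proof -
    have "((1 - k1) * s$i + (1 - k0) - 1) * Q$i * P$i = ((1 - k1) * s$i + (1 - k0) - 1) * (Q$i * P$i)"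
      by (simp only: mult.assoc)
    also have "\<dots> = (k1 * s$i + k0 - 1) * q$i * p$i - (s$i - 1) * (q$i * p$i)"
      by (simp only: QPj) (simp add: algebra_simps)
    finally show ?thesis .
  qed
  show ?thesis
    unfolding Htilde_def garnierH_def Let_def a' E' P_def[symmetric] Q_def[symmetric]
    unfolding a_def[symmetric] E_def[symmetric]
    apply (simp only: t1 t2 t3 t4 t5 t6 T7 T8)
    by (rule finalalg) (use s0[of i] s1[of i] in auto)
qed

theorem theorem1p3:
  fixes k0 k1 kinf :: complex and th :: "complex^'n::finite"
  shows
  "(\<forall>z \<in> garnier_dom k0 k1 kinf th. \<forall>u v.
      (\<Sum>i\<in>UNIV.
          wedge_d (\<lambda>(q, p, s). p $ i) (\<lambda>(q, p, s). q $ i) z u v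
        - wedge_d (\<lambda>(q, p, s). garnierH k0 k1 kinf th q p s i) (\<lambda>(q, p, s). s $ i) z u v)
    = (\<Sum>i\<in>UNIV.
          wedge_d (\<lambda>(q, p, s). RtauP k0 k1 kinf th q p s i)
                  (\<lambda>(q, p, s). RtauQ k0 k1 kinf th q p s i) z u v
        - wedge_d (\<lambda>(q, p, s). Htilde k0 k1 kinf th q p s i) (\<lambda>(q, p, s). s $ i) z u v))
   \<and> (\<forall>(q, p, s) \<in> garnier_dom k0 k1 kinf th. \<forall>i.
        Htilde k0 k1 kinf th q p s i =
        garnierH (1 - k0) (1 - k1) (- kinf) (- th)
          (\<chi> j. RtauQ k0 k1 kinf th q p s j) (\<chi> j. RtauP k0 k1 kinf th q p s j) s i)"
proof (intro conjI ballI allI)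
  fix z u v assume "z \<in> garnier_dom k0 k1 kinf th"
  then show "(\<Sum>i\<in>UNIV.
          wedge_d (\<lambda>(q, p, s). p $ i) (\<lambda>(q, p, s). q $ i) z u v
        - wedge_d (\<lambda>(q, p, s). garnierH k0 k1 kinf th q p s i) (\<lambda>(q, p, s). s $ i) z u v)
    = (\<Sum>i\<in>UNIV.
          wedge_d (\<lambda>(q, p, s). RtauP k0 k1 kinf th q p s i)
                  (\<lambda>(q, p, s). RtauQ k0 k1 kinf th q p s i) z u v
        - wedge_d (\<lambda>(q, p, s). Htilde k0 k1 kinf th q p s i) (\<lambda>(q, p, s). s $ i) z u v)"
    by (rule part1)
next
  fix x assume x: "x \<in> garnier_dom k0 k1 kinf th"
  obtain q p s where xe: "x = (q, p, s)" by (cases x) auto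
  show "case x of (q, p, s) \<Rightarrow> \<forall>i. Htilde k0 k1 kinf th q p s i =
        garnierH (1 - k0) (1 - k1) (- kinf) (- th)
          (\<chi> j. RtauQ k0 k1 kinf th q p s j) (\<chi> j. RtauP k0 k1 kinf th q p s j) s i"
    using part2[of q p s] x unfolding xe by simp
qed

end
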